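(* For every instance $I$ of the Bilevel Shortest Path problem (on a directed or an undirected graph), $\mathrm{OPT}_{\mathrm{str}}(I)\le\mathrm{OPT}_{\mathrm{weak}}(I)$.
   Context: An instance is $I=(G,E^\ell,E^f,s,t,c,d)$: $G=(V,E)$ a simple directed or undirected graph, $E=E^\ell\cup E^f$ a partition into leader's and follower's edges, $s,t\in V$, $c,d:E\to\mathbb{R}_{\ge0}$; $f(Z)=\sum_{e\in Z}f(e)$. Paths are simple, identified with edge sets; $\mathcal P_{st}$ (the $s$-$t$-paths) is nonempty. $\mathrm{OPT}_{\mathrm{str}}(I)=\min c(X\cup Y)$ over $X\subseteq E^\ell$, $Y\in\arg\min\{d(Y'):Y'\subseteq E^f,\ X\cup Y'\in\mathcal P_{st}\}$. $\mathrm{OPT}_{\mathrm{weak}}(I)$ is the same but with the follower's constraint that $X\cup Y'$ contains some path of $\mathcal P_{st}$. Leader choices making the follower's problem infeasible are infeasible; optimistic setting: among follower-optimal responses the one minimizing the leader's cost is chosen. *)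

theory Defs
  imports Complex_Main
begin

text \<open>Edges are built from ordered vertex pairs by a function mk:
  directed graphs use mk u v = (u,v), undirected graphs use mk u v = {u,v}.
  A (simple) s-t-path is identified with its edge set.\<close>

definition is_path :: "('v \<Rightarrow> 'v \<Rightarrow> 'e) \<Rightarrow> 'e set \<Rightarrow> 'v \<Rightarrow> 'v \<Rightarrow> 'e set \<Rightarrow> bool" where
  "is_path mk E s t P \<longleftrightarrow>
     (\<exists>vs. vs \<noteq> [] \<and> distinct vs \<and> hd vs = s \<and> last vs = t \<and>
        (\<forall>i. Suc i < length vs \<longrightarrow> mk (vs ! i) (vs ! Suc i) \<in> E) \<and>
        P = {mk (vs ! i) (vs ! Suc i) | i. Suc i < length vs})"

definition paths_st :: "('v \<Rightarrow> 'v \<Rightarrow> 'e) \<Rightarrow> 'e set \<Rightarrow> 'v \<Rightarrow> 'v \<Rightarrow> 'e set set" where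
  "paths_st mk E s t = {P. is_path mk E s t P}"

definition follower_opt_str ::
  "('v \<Rightarrow> 'v \<Rightarrow> 'e) \<Rightarrow> 'e set \<Rightarrow> 'e set \<Rightarrow> 'v \<Rightarrow> 'v \<Rightarrow> ('e \<Rightarrow> real) \<Rightarrow> 'e set \<Rightarrow> 'e set \<Rightarrow> bool" where
  "follower_opt_str mk E Ef s t d X Y \<longleftrightarrow>
     Y \<subseteq> Ef \<and> X \<union> Y \<in> paths_st mk E s t \<and>
     (\<forall>Y'. Y' \<subseteq> Ef \<and> X \<union> Y' \<in> paths_st mk E s t \<longrightarrow> sum d Y \<le> sum d Y')"

definition follower_opt_weak ::
  "('v \<Rightarrow> 'v \<Rightarrow> 'e) \<Rightarrow> 'e set \<Rightarrow> 'e set \<Rightarrow> 'v \<Rightarrow> 'v \<Rightarrow> ('e \<Rightarrow> real) \<Rightarrow> 'e set \<Rightarrow> 'e set \<Rightarrow> bool" where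
  "follower_opt_weak mk E Ef s t d X Y \<longleftrightarrow>
     Y \<subseteq> Ef \<and> (\<exists>P \<in> paths_st mk E s t. P \<subseteq> X \<union> Y) \<and>
     (\<forall>Y'. Y' \<subseteq> Ef \<and> (\<exists>P \<in> paths_st mk E s t. P \<subseteq> X \<union> Y') \<longrightarrow> sum d Y \<le> sum d Y')"

definition OPT_str ::
  "('v \<Rightarrow> 'v \<Rightarrow> 'e) \<Rightarrow> 'e set \<Rightarrow> 'e set \<Rightarrow> 'e set \<Rightarrow> 'v \<Rightarrow> 'v \<Rightarrow> ('e \<Rightarrow> real) \<Rightarrow> ('e \<Rightarrow> real) \<Rightarrow> real" where
  "OPT_str mk E El Ef s t c d =
     Min {sum c (X \<union> Y) | X Y. X \<subseteq> El \<and> follower_opt_str mk E Ef s t d X Y}"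

definition OPT_weak ::
  "('v \<Rightarrow> 'v \<Rightarrow> 'e) \<Rightarrow> 'e set \<Rightarrow> 'e set \<Rightarrow> 'e set \<Rightarrow> 'v \<Rightarrow> 'v \<Rightarrow> ('e \<Rightarrow> real) \<Rightarrow> ('e \<Rightarrow> real) \<Rightarrow> real" where
  "OPT_weak mk E El Ef s t c d =
     Min {sum c (X \<union> Y) | X Y. X \<subseteq> El \<and> follower_opt_weak mk E Ef s t d X Y}"

definition bsp_instance ::
  "('v \<Rightarrow> 'v \<Rightarrow> 'e) \<Rightarrow> 'v set \<Rightarrow> 'e set \<Rightarrow> 'e set \<Rightarrow> 'e set \<Rightarrow> 'v \<Rightarrow> 'v \<Rightarrow> ('e \<Rightarrow> real) \<Rightarrow> ('e \<Rightarrow> real) \<Rightarrow> bool" where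
  "bsp_instance mk V E El Ef s t c d \<longleftrightarrow>
     finite V \<and> E \<subseteq> {mk u v | u v. u \<in> V \<and> v \<in> V \<and> u \<noteq> v} \<and>
     s \<in> V \<and> t \<in> V \<and> El \<union> Ef = E \<and> El \<inter> Ef = {} \<and>
     (\<forall>e \<in> E. c e \<ge> 0 \<and> d e \<ge> 0) \<and> paths_st mk E s t \<noteq> {}"

definition dir_edge :: "'v \<Rightarrow> 'v \<Rightarrow> 'v \<times> 'v" where
  "dir_edge u v = (u, v)"

definition undir_edge :: "'v \<Rightarrow> 'v \<Rightarrow> 'v set" where
  "undir_edge u v = {u, v}"

end

theory Submission
  imports Defs
begin

lemma path_sub: "P \<in> paths_st mk E s t \<Longrightarrow> P \<subseteq> E"
  unfolding paths_st_def is_path_def by auto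

lemma main:
  assumes fin: "finite E" and un: "El \<union> Ef = E" and dis: "El \<inter> Ef = {}"
    and nn: "\<forall>e\<in>E. c e \<ge> 0 \<and> d e \<ge> 0" and ne: "paths_st mk E s t \<noteq> {}"
  shows "OPT_str mk E El Ef s t c d \<le> OPT_weak mk E El Ef s t c d"
proof -
  let ?S = "{sum c (X \<union> Y) | X Y. X \<subseteq> El \<and> follower_opt_str mk E Ef s t d X Y}"
  let ?W = "{sum c (X \<union> Y) | X Y. X \<subseteq> El \<and> follower_opt_weak mk E Ef s t d X Y}"
  have finEl: "finite El" and finEf: "finite Ef" using fin un by auto
  have finS: "finite ?S"
  proof (rule finite_subset)
    show "?S \<subseteq> (\<lambda>(X,Y). sum c (X \<union> Y)) ` (Pow El \<times> Pow Ef)"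
      unfolding follower_opt_str_def by auto
    show "finite ((\<lambda>(X,Y). sum c (X \<union> Y)) ` (Pow El \<times> Pow Ef))" using finEl finEf by auto
  qed
  have finW: "finite ?W"
  proof (rule finite_subset)
    show "?W \<subseteq> (\<lambda>(X,Y). sum c (X \<union> Y)) ` (Pow El \<times> Pow Ef)"
      unfolding follower_opt_weak_def by auto
    show "finite ((\<lambda>(X,Y). sum c (X \<union> Y)) ` (Pow El \<times> Pow Ef))" using finEl finEf by auto
  qed
  define F where "F = {Y. Y \<subseteq> Ef \<and> (\<exists>P\<in>paths_st mk E s t. P \<subseteq> El \<union> Y)}"
  have finF: "finite F" 
    by (rule finite_subset[of _ "Pow Ef"]) (auto simp: F_def finEf)
  obtain P0 where P0: "P0 \<in> paths_st mk E s t" using ne by auto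
  have "Ef \<in> F" unfolding F_def using P0 path_sub[OF P0] un by auto
  hence neF: "sum d ` F \<noteq> {}" by auto
  have "Min (sum d ` F) \<in> sum d ` F" using finF neF by (intro Min_in) auto
  then obtain Y0 where Y0: "Y0 \<in> F" "sum d Y0 = Min (sum d ` F)" by auto
  have "follower_opt_weak mk E Ef s t d El Y0"
    unfolding follower_opt_weak_def
  proof (intro conjI allI impI)
    show "Y0 \<subseteq> Ef" "\<exists>P\<in>paths_st mk E s t. P \<subseteq> El \<union> Y0" using Y0(1) unfolding F_def by auto
    fix Y' assume "Y' \<subseteq> Ef \<and> (\<exists>P\<in>paths_st mk E s t. P \<subseteq> El \<union> Y')"
    hence "Y' \<in> F" unfolding F_def by auto
    thus "sum d Y0 \<le> sum d Y'" using Y0(2) finF by simp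
  qed
  hence "?W \<noteq> {}" by blast
  hence "Min ?W \<in> ?W" using finW by (intro Min_in) auto
  then obtain X Y where XY: "Min ?W = sum c (X \<union> Y)" "X \<subseteq> El"
     "follower_opt_weak mk E Ef s t d X Y" by blast
  from XY(3) have Y: "Y \<subseteq> Ef" and Pex: "\<exists>P\<in>paths_st mk E s t. P \<subseteq> X \<union> Y"
    and Yopt: "\<And>Y'. Y' \<subseteq> Ef \<Longrightarrow> (\<exists>P\<in>paths_st mk E s t. P \<subseteq> X \<union> Y') \<Longrightarrow> sum d Y \<le> sum d Y'"
    unfolding follower_opt_weak_def by auto
  obtain P where P: "P \<in> paths_st mk E s t" "P \<subseteq> X \<union> Y" using Pex by auto
  have PE: "P \<subseteq> E" using path_sub[OF P(1)] .
  define X' where "X' = P \<inter> El"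
  define Y' where "Y' = P \<inter> Ef"
  have PXY: "X' \<union> Y' = P" unfolding X'_def Y'_def using PE un by auto
  have Y'Y: "Y' \<subseteq> Y" unfolding Y'_def using P(2) XY(2) dis by auto
  have dY': "sum d Y' \<le> sum d Y"
    using Y'Y Y finEf nn un by (intro sum_mono2) (auto intro: finite_subset)
  have "follower_opt_str mk E Ef s t d X' Y'"
    unfolding follower_opt_str_def
  proof (intro conjI allI impI)
    show "Y' \<subseteq> Ef" unfolding Y'_def by auto
    show "X' \<union> Y' \<in> paths_st mk E s t" using PXY P(1) by simp
    fix Z assume Z: "Z \<subseteq> Ef \<and> X' \<union> Z \<in> paths_st mk E s t"
    have "X' \<union> Z \<subseteq> X \<union> Z" unfolding X'_def using P(2) Y dis XY(2) by auto
    hence "sum d Y \<le> sum d Z" using Z by (intro Yopt) blast+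
    thus "sum d Y' \<le> sum d Z" using dY' by simp
  qed
  moreover have "X' \<subseteq> El" unfolding X'_def by auto
  ultimately have "sum c P \<in> ?S" using PXY by blast
  hence "Min ?S \<le> sum c P" using finS by simp
  also have "sum c P \<le> sum c (X \<union> Y)"
    using P(2) XY(2) Y finEl finEf nn un
    by (intro sum_mono2) (auto intro: finite_subset)
  finally show ?thesis unfolding OPT_str_def OPT_weak_def using XY(1) by simp
qed

lemma finE:
  assumes "finite V" "E \<subseteq> {mk u v | u v. u \<in> V \<and> v \<in> V \<and> u \<noteq> v}"
  shows "finite E"
proof (rule finite_subset[OF assms(2)])
  have "{mk u v | u v. u \<in> V \<and> v \<in> V \<and> u \<noteq> v} \<subseteq> (\<lambda>(u,v). mk u v) ` (V \<times> V)" by auto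
  thus "finite {mk u v | u v. u \<in> V \<and> v \<in> V \<and> u \<noteq> v}"
    using assms(1) by (meson finite_SigmaI finite_imageI finite_subset)
qed

lemma gen: "bsp_instance mk V E El Ef s t c d \<Longrightarrow>
  OPT_str mk E El Ef s t c d \<le> OPT_weak mk E El Ef s t c d"
  unfolding bsp_instance_def by (intro main finE[of V E mk]) auto

theorem corollary3p5:
  shows "(\<forall>(V::'v set) E El Ef s t c d.
            bsp_instance dir_edge V E El Ef s t c d \<longrightarrow>
            OPT_str dir_edge E El Ef s t c d \<le> OPT_weak dir_edge E El Ef s t c d)
       \<and> (\<forall>(V::'v set) E El Ef s t c d.
            bsp_instance undir_edge V E El Ef s t c d \<longrightarrow>
            OPT_str undir_edge E El Ef s t c d \<le> OPT_weak undir_edge E El Ef s t c d)"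
  using gen[where mk=dir_edge] gen[where mk=undir_edge] by blast

end
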